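(* For every permutation $\sigma$ and every Cayley permutation $y$, $$\mathrm{Flat}(\sigma)=\gamma\bigl(\mathrm{RGF}[\sigma^{-1}]\bigr)\qquad\text{and}\qquad\gamma\bigl(\mathrm{RGF}[y]\bigr)=\mathrm{Flat}\bigl(\gamma(y)\bigr).$$ In particular $|\mathrm{Flat}_n(\sigma)|=|\mathrm{RGF}_n[\sigma^{-1}]|$ for every $n$.
   Context: A Cayley permutation of length $n$ is a word of positive integers in which every integer from $1$ to its maximum occurs. Containment $y\le x$: there are indices $i_1<\dots<i_k$ ($k$ the length of $y$) with $x(i_s)<x(i_t)\iff y(s)<y(t)$ and $x(i_s)=x(i_t)\iff y(s)=y(t)$; otherwise $x$ avoids $y$. For $x$ of length $n$, $\gamma(x)$ is the permutation of $[n]$ obtained by sorting the pairs $(x(i),i)$ increasingly by first coordinate, ties by decreasing second coordinate, and reading off the second coordinates; $\gamma(E)=\{\gamma(x):x\in E\}$. $x\sim y$ iff $\gamma(x)=\gamma(y)$; $[y]$ is the class of $y$; for a set $E$ of Cayley permutations, $E[y]$ is the set of elements of $E$ avoiding every element of $[y]$. $\mathrm{RGF}_n$ (restricted growth functions) is the set of Cayley permutations $x$ of length $n$ with $x(1)=1$ (if $n\ge1$) and $x(i+1)\le\max\{x(1),\dots,x(i)\}+1$ for $1\le i<n$; $\mathrm{RGF}=\bigcup_n\mathrm{RGF}_n$. $\mathrm{Flat}$ is the set of permutations avoiding the vincular pattern $23\text{-}1$, i.e. permutations $\pi$ with no indices $i$ and $k>i+1$ such that $\pi(k)<\pi(i)<\pi(i+1)$;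 $\mathrm{Flat}_n(\sigma)$ is the set of elements of $\mathrm{Flat}$ of length $n$ avoiding $\sigma$. *)

theory Defs
  imports Main "HOL-Library.Product_Lexorder"
begin

text \<open>Words are lists of naturals; positions are 0-based in the list, values are the
  letters themselves (positive integers).\<close>

definition cayley :: "nat list \<Rightarrow> bool" where
  "cayley x \<longleftrightarrow> (\<forall>v\<in>set x. 0 < v \<and> (\<forall>j\<in>{1..v}. j \<in> set x))"

definition is_perm :: "nat list \<Rightarrow> bool" where
  "is_perm x \<longleftrightarrow> cayley x \<and> distinct x"

definition contains :: "nat list \<Rightarrow> nat list \<Rightarrow> bool" where
  "contains x y \<longleftrightarrow> (\<exists>f::nat \<Rightarrow> nat.
     strict_mono_on {..<length y} f \<and> (\<forall>t<length y. f t < length x) \<and>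
     (\<forall>s<length y. \<forall>t<length y.
        (x ! f s < x ! f t \<longleftrightarrow> y ! s < y ! t) \<and> (x ! f s = x ! f t \<longleftrightarrow> y ! s = y ! t)))"

definition avoids :: "nat list \<Rightarrow> nat list \<Rightarrow> bool" where
  "avoids x y \<longleftrightarrow> \<not> contains x y"

definition gamma :: "nat list \<Rightarrow> nat list" where
  "gamma x = map snd (sort_key (\<lambda>(v, i). (v, - int i)) (zip x [1..<Suc (length x)]))"

definition cls :: "nat list \<Rightarrow> nat list set" where
  "cls y = {x. cayley x \<and> gamma x = gamma y}"

definition avoid_cls :: "nat list set \<Rightarrow> nat list \<Rightarrow> nat list set" where
  "avoid_cls E y = {x \<in> E. \<forall>z\<in>cls y. avoids x z}"

definition RGF_n :: "nat \<Rightarrow> nat list set" where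
  "RGF_n n = {x. cayley x \<and> length x = n \<and> (n \<ge> 1 \<longrightarrow> x ! 0 = 1) \<and>
     (\<forall>i. 1 \<le> i \<and> i < n \<longrightarrow> x ! i \<le> Max (set (take i x)) + 1)}"

definition RGF :: "nat list set" where
  "RGF = (\<Union>n. RGF_n n)"

text \<open>Flat: permutations avoiding the vincular pattern 23-1.\<close>
definition Flat :: "nat list set" where
  "Flat = {p. is_perm p \<and>
     \<not> (\<exists>i k. i + 1 < k \<and> k < length p \<and> p ! k < p ! i \<and> p ! i < p ! (i + 1))}"

definition Flat_av :: "nat list \<Rightarrow> nat list set" where
  "Flat_av s = {p \<in> Flat. avoids p s}"

definition Flat_n :: "nat \<Rightarrow> nat list \<Rightarrow> nat list set" where
  "Flat_n n s = {p \<in> Flat_av s. length p = n}"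

definition perm_inv :: "nat list \<Rightarrow> nat list" where
  "perm_inv s = map (\<lambda>v. Suc (LEAST i. i < length s \<and> s ! i = v)) [1..<Suc (length s)]"

end

theory Submission
  imports Defs
begin



definition lt :: "nat list \<Rightarrow> nat \<Rightarrow> nat \<Rightarrow> bool" where
  "lt x i j \<longleftrightarrow> x!i < x!j \<or> (x!i = x!j \<and> j < i)"

definition gP :: "nat list \<Rightarrow> nat list" where
  "gP x = sort_key (\<lambda>i. (x!i, - int (Suc i))) [0..<length x]"

lemma insort_key_map: "insort_key f (h a) (map h ys) = map h (insort_key (f \<circ> h) a ys)"
  by (induction ys) auto

lemma sort_key_map: "sort_key f (map h xs) = map h (sort_key (f \<circ> h) xs)"
  by (induction xs) (auto simp: insort_key_map comp_def)

lemma gamma_gP: "gamma x = map Suc (gP x)"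
proof -
  have z: "zip x [1..<Suc (length x)] = map (\<lambda>i. (x!i, Suc i)) [0..<length x]"
    by (rule nth_equalityI) (auto simp del: upt_Suc simp: nth_upt)
  show ?thesis unfolding gamma_def gP_def z sort_key_map
    by (simp add: comp_def)
qed

lemma gP_length[simp]: "length (gP x) = length x" by (simp add: gP_def)
lemma gP_distinct: "distinct (gP x)" by (simp add: gP_def)
lemma gP_set: "set (gP x) = {..<length x}" by (auto simp: gP_def)

lemma gP_sorted: "sorted_wrt (lt x) (gP x)"
proof -
  let ?K = "\<lambda>i. (x!i, - int (Suc i))"
  have "inj ?K" by (auto simp: inj_def)
  hence "distinct (map ?K (gP x))" using gP_distinct by (simp add: distinct_map inj_on_def)
  moreover have "sorted (map ?K (gP x))" by (simp add: gP_def)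
  ultimately have "sorted_wrt (<) (map ?K (gP x))" by (simp add: strict_sorted_iff)
  hence "sorted_wrt (\<lambda>i j. ?K i < ?K j) (gP x)" by (simp add: sorted_wrt_map)
  thus ?thesis by (rule sorted_wrt_mono_rel[rotated]) (auto simp: lt_def less_prod_def)
qed

lemma lt_irrefl: "\<not> lt x i i" by (simp add: lt_def)
lemma lt_asym: "lt x i j \<Longrightarrow> \<not> lt x j i" by (auto simp: lt_def)
lemma lt_total: "i \<noteq> j \<Longrightarrow> lt x i j \<or> lt x j i" by (auto simp: lt_def)
lemma lt_le: "lt x i j \<Longrightarrow> x!i \<le> x!j" by (auto simp: lt_def)

lemma sorted_pos:
  assumes "distinct Q" "sorted_wrt (lt x) Q" "a < length Q" "b < length Q"
  shows "lt x (Q!a) (Q!b) \<longleftrightarrow> a < b"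
proof (cases "a < b")
  case True thus ?thesis using assms sorted_wrt_nth_less by blast
next
  case False
  show ?thesis
  proof (cases "a = b")
    case True thus ?thesis using lt_irrefl False by auto
  next
    case False2: False
    hence "b < a" using False by auto
    hence "lt x (Q!b) (Q!a)" using assms sorted_wrt_nth_less by blast
    thus ?thesis using lt_asym False by blast
  qed
qed

lemma sorted_wrt_unique:
  assumes "sorted_wrt R xs" "sorted_wrt R ys" "set xs = set ys" "distinct xs" "distinct ys"
    "\<And>a b. R a b \<Longrightarrow> \<not> R b a"
  shows "xs = ys"
  using assms(1-5)
proof (induction xs arbitrary: ys)
  case Nil thus ?case by simp
next
  case (Cons a xs)
  then obtain b ys' where ys: "ys = b # ys'" by (cases ys) auto
  have ab: "a = b"
  proof (rule ccontr)
    assume "a \<noteq> b"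
    hence "b \<in> set xs" "a \<in> set ys'" using Cons.prems ys by auto
    hence "R a b" "R b a" using Cons.prems ys by auto
    thus False using assms(6) by blast
  qed
  have "set xs = set ys'" using Cons.prems ys ab by auto
  thus ?case using Cons ys ab by auto
qed

lemma gamma_char:
  assumes "distinct Q" "set Q = {..<length x}" "sorted_wrt (lt x) Q"
  shows "gamma x = map Suc Q"
proof -
  have "gP x = Q"
    by (rule sorted_wrt_unique[OF gP_sorted assms(3)]) (use assms gP_set gP_distinct lt_asym in auto)
  thus ?thesis by (simp add: gamma_gP)
qed

lemma gamma_eq_lt:
  assumes "length x = length y" "\<And>i j. i < length x \<Longrightarrow> j < length x \<Longrightarrow> lt x i j = lt y i j"
  shows "gamma x = gamma y"
proof -
  have "sorted_wrt (lt x) (gP y)"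
    by (rule sorted_wrt_mono_rel[OF _ gP_sorted]) (use assms gP_set in auto)
  hence "gamma x = map Suc (gP y)" using gamma_char[of "gP y" x] assms gP_set gP_distinct by auto
  thus ?thesis by (simp add: gamma_gP)
qed

lemma length_gamma[simp]: "length (gamma x) = length x" by (simp add: gamma_gP)




definition C :: "nat list \<Rightarrow> nat \<Rightarrow> nat" where
  "C w v = card {u \<in> set w. u < v}"

definition red :: "nat list \<Rightarrow> nat list" where
  "red w = map (\<lambda>v. Suc (C w v)) w"

lemma C_less: "v1 \<in> set w \<Longrightarrow> v2 \<in> set w \<Longrightarrow> C w v1 < C w v2 \<longleftrightarrow> v1 < v2"
proof
  assume a: "v1 \<in> set w" "v2 \<in> set w" "C w v1 < C w v2"
  show "v1 < v2"
  proof (rule ccontr)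
    assume "\<not> v1 < v2"
    hence "{u \<in> set w. u < v2} \<subseteq> {u \<in> set w. u < v1}" by auto
    hence "C w v2 \<le> C w v1" unfolding C_def by (intro card_mono) auto
    thus False using a by auto
  qed
next
  assume a: "v1 \<in> set w" "v2 \<in> set w" "v1 < v2"
  hence "{u \<in> set w. u < v1} \<subset> {u \<in> set w. u < v2}" by auto
  thus "C w v1 < C w v2" unfolding C_def by (intro psubset_card_mono) auto
qed

lemma C_eq: "v1 \<in> set w \<Longrightarrow> v2 \<in> set w \<Longrightarrow> C w v1 = C w v2 \<longleftrightarrow> v1 = v2"
  using C_less[of v1 w v2] C_less[of v2 w v1] by (metis nat_neq_iff)

lemma C_down: "v \<in> set w \<Longrightarrow> k \<le> C w v \<Longrightarrow> \<exists>v'\<in>set w. C w v' = k"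
proof (induction v arbitrary: k rule: less_induct)
  case (less v)
  show ?case
  proof (cases "k = C w v")
    case True thus ?thesis using less by auto
  next
    case False
    hence kl: "k < C w v" using less by auto
    let ?S = "{u \<in> set w. u < v}"
    have fin: "finite ?S" by auto
    have ne: "?S \<noteq> {}" using kl unfolding C_def by (metis card.empty not_less0)
    define v'' where "v'' = Max ?S"
    have v''S: "v'' \<in> ?S" using Max_in[OF fin ne] v''_def by auto
    have mx: "\<And>u. u \<in> set w \<Longrightarrow> u < v \<Longrightarrow> u \<le> v''" using Max_ge[OF fin] v''_def by auto
    have "?S = insert v'' {u \<in> set w. u < v''}"
      using mx v''S by force
    hence "C w v = Suc (C w v'')" unfolding C_def using fin by (simp add: card_insert_if)
    hence "k \<le> C w v''" using kl by auto
    thus ?thesis using less.IH[of v'' k] v''S by auto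
  qed
qed

lemma cayley_red: "cayley (red w)"
  unfolding cayley_def
proof (intro ballI conjI)
  fix v assume "v \<in> set (red w)"
  then obtain u where u: "u \<in> set w" "v = Suc (C w u)" by (auto simp: red_def)
  thus "0 < v" by auto
  fix j assume j: "j \<in> {1..v}"
  hence "j - 1 \<le> C w u" using u by auto
  then obtain v' where "v' \<in> set w" "C w v' = j - 1" using C_down[OF u(1)] by blast
  thus "j \<in> set (red w)" using j by (force simp: red_def)
qed

lemma length_red[simp]: "length (red w) = length w" by (simp add: red_def)

lemma red_nth: "i < length w \<Longrightarrow> red w ! i = Suc (C w (w!i))" by (simp add: red_def)

lemma lt_red: "i < length w \<Longrightarrow> j < length w \<Longrightarrow> lt (red w) i j = lt w i j"
  unfolding lt_def using red_nth C_less C_eq by (simp add: red_nth C_less C_eq)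

lemma contains_gamma:
  assumes "contains x z"
  shows "contains (gamma x) (gamma z)"
proof -
  let ?n = "length x" and ?m = "length z"
  let ?P = "gP x" and ?Q = "gP z"
  obtain g where g: "strict_mono_on {..<?m} g" "\<And>t. t < ?m \<Longrightarrow> g t < ?n"
    "\<And>s t. s < ?m \<Longrightarrow> t < ?m \<Longrightarrow> (x ! g s < x ! g t \<longleftrightarrow> z ! s < z ! t) \<and> (x ! g s = x ! g t \<longleftrightarrow> z ! s = z ! t)"
    using assms unfolding contains_def by blast
  have "\<forall>i. \<exists>a. i < ?n \<longrightarrow> a < ?n \<and> ?P!a = i"
    using gP_set[of x] by (metis gP_length in_set_conv_nth lessThan_iff)
  then obtain h where h: "\<And>i. i < ?n \<Longrightarrow> h i < ?n \<and> ?P!(h i) = i" by metis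
  have Qm: "\<And>a. a < ?m \<Longrightarrow> ?Q!a < ?m" using gP_set[of z] by (metis gP_length lessThan_iff nth_mem)
  have ltg: "\<And>i j. i < ?m \<Longrightarrow> j < ?m \<Longrightarrow> lt z i j \<longleftrightarrow> lt x (g i) (g j)"
    unfolding lt_def using g(3) strict_mono_on_less[OF g(1)] by auto
  define f where "f a = h (g (?Q!a))" for a
  have fn: "\<And>a. a < ?m \<Longrightarrow> f a < ?n" unfolding f_def using h g(2) Qm by blast
  have Pf: "\<And>a. a < ?m \<Longrightarrow> ?P!(f a) = g (?Q!a)" unfolding f_def using h g(2) Qm by blast
  have sm: "strict_mono_on {..<?m} f"
  proof (rule strict_mono_onI)
    fix a b assume ab: "a \<in> {..<?m}" "b \<in> {..<?m}" "a < b"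
    hence "lt z (?Q!a) (?Q!b)" using sorted_pos[OF gP_distinct gP_sorted] by auto
    hence "lt x (g (?Q!a)) (g (?Q!b))" using ltg Qm ab by auto
    hence "lt x (?P!(f a)) (?P!(f b))" using Pf ab by auto
    thus "f a < f b" using sorted_pos[OF gP_distinct gP_sorted] fn ab by auto
  qed
  have cmp: "\<And>s t. s < ?m \<Longrightarrow> t < ?m \<Longrightarrow> (g (?Q!s) < g (?Q!t) \<longleftrightarrow> ?Q!s < ?Q!t) \<and> (g (?Q!s) = g (?Q!t) \<longleftrightarrow> ?Q!s = ?Q!t)"
    using strict_mono_on_less[OF g(1)] strict_mono_on_eqD[OF g(1)] Qm by (metis lessThan_iff)
  show ?thesis unfolding contains_def
    apply (rule exI[of _ f])
    using sm fn Pf cmp by (auto simp: gamma_gP)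
qed

lemma contains_gamma_rev:
  assumes "contains (gamma x) (gamma y)"
  shows "\<exists>z. cayley z \<and> gamma z = gamma y \<and> contains x z"
proof -
  let ?n = "length x" and ?m = "length y"
  let ?P = "gP x" and ?Q = "gP y"
  obtain f where f: "strict_mono_on {..<?m} f" "\<And>t. t < ?m \<Longrightarrow> f t < ?n"
    "\<And>s t. s < ?m \<Longrightarrow> t < ?m \<Longrightarrow> (Suc (?P ! f s) < Suc (?P ! f t) \<longleftrightarrow> Suc (?Q ! s) < Suc (?Q ! t))"
    using assms unfolding contains_def gamma_gP by auto
  have "\<forall>i. \<exists>a. i < ?m \<longrightarrow> a < ?m \<and> ?Q!a = i"
    using gP_set[of y] by (metis gP_length in_set_conv_nth lessThan_iff)
  then obtain h where h: "\<And>i. i < ?m \<Longrightarrow> h i < ?m \<and> ?Q!(h i) = i" by metis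
  have Pn: "\<And>a. a < ?n \<Longrightarrow> ?P!a < ?n" using gP_set[of x] by (metis gP_length lessThan_iff nth_mem)
  define g where "g t = ?P ! (f (h t))" for t
  have gn: "\<And>t. t < ?m \<Longrightarrow> g t < ?n" unfolding g_def using Pn f(2) h by blast
  have gsm: "strict_mono_on {..<?m} g"
  proof (rule strict_mono_onI)
    fix t u assume tu: "t \<in> {..<?m}" "u \<in> {..<?m}" "t < u"
    thus "g t < g u" unfolding g_def using f(3)[of "h t" "h u"] h by auto
  qed
  define w where "w = map (\<lambda>t. x ! g t) [0..<?m]"
  define z where "z = red w"
  have lw: "length w = ?m" by (simp add: w_def)
  have wn: "\<And>t. t < ?m \<Longrightarrow> w ! t = x ! g t" by (simp add: w_def)
  have zc: "\<And>s t. s < ?m \<Longrightarrow> t < ?m \<Longrightarrow> (z!s < z!t \<longleftrightarrow> w!s < w!t) \<and> (z!s = z!t \<longleftrightarrow> w!s = w!t)"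
    unfolding z_def using red_nth lw C_less C_eq by (simp add: red_nth C_less C_eq)
  have cont: "contains x z"
    unfolding contains_def
    apply (rule exI[of _ g])
    using gsm gn zc wn by (simp add: z_def lw)
  have "gamma z = gamma y"
  proof (rule gamma_eq_lt)
    show "length z = length y" by (simp add: z_def lw)
    fix i j assume ij: "i < length z" "j < length z"
    hence ij': "i < ?m" "j < ?m" by (auto simp: z_def lw)
    have "lt z i j = lt w i j" unfolding z_def using lt_red ij' lw by auto
    also have "\<dots> = lt x (g i) (g j)"
      unfolding lt_def using wn ij' strict_mono_on_less[OF gsm] by auto
    also have "\<dots> = (f (h i) < f (h j))"
      unfolding g_def using sorted_pos[OF gP_distinct gP_sorted] f(2) h ij' by auto
    also have "\<dots> = (h i < h j)" using strict_mono_on_less[OF f(1)] h ij' by auto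
    also have "\<dots> = lt y (?Q!(h i)) (?Q!(h j))"
      using sorted_pos[OF gP_distinct[of y] gP_sorted[of y], of "h i" "h j"] h ij' by simp
    also have "\<dots> = lt y i j" using h ij' by auto
    finally show "lt z i j = lt y i j" .
  qed
  thus ?thesis using cont cayley_red z_def by blast
qed




lemma RGF_iff: "x \<in> RGF \<longleftrightarrow> x \<in> RGF_n (length x)"
  by (auto simp: RGF_def RGF_n_def)

lemma rgf_props:
  assumes "x \<in> RGF"
  shows "cayley x" "length x \<ge> 1 \<Longrightarrow> x!0 = 1"
    "\<And>i. 1 \<le> i \<Longrightarrow> i < length x \<Longrightarrow> x ! i \<le> Max (set (take i x)) + 1"
  using assms by (auto simp: RGF_iff RGF_n_def)

lemma cayley_pos: "cayley x \<Longrightarrow> i < length x \<Longrightarrow> 0 < x!i"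
  unfolding cayley_def by auto

lemma cayley_mem: "cayley x \<Longrightarrow> i < length x \<Longrightarrow> 1 \<le> v \<Longrightarrow> v \<le> x!i \<Longrightarrow> v \<in> set x"
  unfolding cayley_def by (meson atLeastAtMost_iff nth_mem)

lemma rgf_lower:
  assumes "x \<in> RGF"
  shows "l < length x \<Longrightarrow> 1 \<le> u \<Longrightarrow> u < x!l \<Longrightarrow> \<exists>k<l. x!k = u"
proof (induction l arbitrary: u rule: less_induct)
  case (less l)
  show ?case
  proof (cases "l = 0")
    case True thus ?thesis using less rgf_props(2)[OF assms] by (simp add: Suc_le_eq)
  next
    case False
    have fin: "finite (set (take l x))" by auto
    have ne: "set (take l x) \<noteq> {}" using False less by auto
    define M where "M = Max (set (take l x))"
    have "M \<in> set (take l x)" using Max_in[OF fin ne] M_def by auto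
    then obtain j where j: "j < l" "x!j = M" using less(2)
      by (auto simp: in_set_conv_nth)
    have "x!l \<le> M + 1" using rgf_props(3)[OF assms, of l] False less M_def by auto
    hence "u \<le> M" using less by auto
    show ?thesis
    proof (cases "u = M")
      case True thus ?thesis using j by auto
    next
      case False
      hence "u < x!j" using \<open>u \<le> M\<close> j by auto
      then obtain k where "k < j" "x!k = u" using less.IH[of j u] j less by auto
      thus ?thesis using j by (metis order.strict_trans)
    qed
  qed
qed

lemma gP_lt_n: "a < length x \<Longrightarrow> gP x ! a < length x"
  using gP_set[of x] by (metis gP_length lessThan_iff nth_mem)

lemma gP_surj: "i < length x \<Longrightarrow> \<exists>c<length x. gP x ! c = i"
  using gP_set[of x] by (metis gP_length in_set_conv_nth lessThan_iff)

lemma gP_sp: "a < length x \<Longrightarrow> b < length x \<Longrightarrow> lt x (gP x ! a) (gP x ! b) \<longleftrightarrow> a < b"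
  using sorted_pos[OF gP_distinct[of x] gP_sorted[of x], of a b] by simp

lemma gP_inj: "a < length x \<Longrightarrow> b < length x \<Longrightarrow> gP x ! a = gP x ! b \<longleftrightarrow> a = b"
  using gP_distinct[of x] by (simp add: nth_eq_iff_index_eq)

lemma mono_pos: "c \<le> d \<Longrightarrow> d < length x \<Longrightarrow> x ! (gP x ! c) \<le> x ! (gP x ! d)"
  using gP_sp[of c x d] lt_le by (cases "c = d") auto

lemma step_asc:
  assumes "x \<in> RGF" "Suc a < length x" "gP x ! a < gP x ! Suc a"
  shows "x ! (gP x ! Suc a) = Suc (x ! (gP x ! a))"
proof -
  let ?P = "gP x" and ?n = "length x"
  have "lt x (?P!a) (?P!Suc a)" using gP_sp assms by auto
  hence lt1: "x ! (?P!a) < x ! (?P!Suc a)" using assms(3) by (auto simp: lt_def)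
  show ?thesis
  proof (rule ccontr)
    assume "\<not> ?thesis"
    hence gt: "Suc (x ! (?P!a)) < x ! (?P!Suc a)" using lt1 by auto
    have "Suc (x ! (?P!a)) \<in> set x"
      using cayley_mem[OF rgf_props(1)[OF assms(1)], of "?P ! Suc a"] gt gP_lt_n assms(2) by auto
    then obtain k where k: "k < ?n" "x!k = Suc (x ! (?P!a))" by (auto simp: in_set_conv_nth)
    then obtain c where c: "c < ?n" "?P!c = k" using gP_surj by blast
    show False
    proof (cases "c \<le> a")
      case True thus False using mono_pos[of c a x] assms c k by auto
    next
      case False thus False using mono_pos[of "Suc a" c x] assms c k gt by auto
    qed
  qed
qed

lemma step_desc:
  assumes "x \<in> RGF" "Suc a < length x" "\<not> gP x ! a < gP x ! Suc a"
  shows "x ! (gP x ! Suc a) = x ! (gP x ! a)"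
proof -
  let ?P = "gP x" and ?n = "length x"
  have ne: "?P!a \<noteq> ?P!Suc a" using gP_inj[of a x "Suc a"] assms by auto
  hence gt: "?P!Suc a < ?P!a" using assms by auto
  have "lt x (?P!a) (?P!Suc a)" using gP_sp assms by auto
  hence le: "x ! (?P!a) \<le> x ! (?P!Suc a)" by (rule lt_le)
  show ?thesis
  proof (rule ccontr)
    assume "\<not> ?thesis"
    hence l: "x ! (?P!a) < x ! (?P!Suc a)" using le by auto
    have "?P!a < ?n" using gP_lt_n assms(2) by simp
    hence pos: "1 \<le> x ! (?P!a)" using cayley_pos[OF rgf_props(1)[OF assms(1)]] by (simp add: Suc_le_eq)
    obtain k where k: "k < ?P!Suc a" "x!k = x ! (?P!a)"
      using rgf_lower[OF assms(1) _ pos l] gP_lt_n assms(2) by blast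
    have kn: "k < ?n" using k gP_lt_n[of "Suc a" x] assms by auto
    then obtain c where c: "c < ?n" "?P!c = k" using gP_surj by blast
    have "lt x (?P!a) (?P!c)" using c k gt by (auto simp: lt_def)
    hence "a < c" using gP_sp assms c by auto
    hence "x ! (?P!Suc a) \<le> x ! (?P!c)" using mono_pos c by auto
    thus False using c k l by auto
  qed
qed

definition asc :: "nat list \<Rightarrow> nat \<Rightarrow> nat" where
  "asc P a = card {b. b < a \<and> P!b < P!Suc b}"

lemma asc_Suc: "asc P (Suc a) = asc P a + (if P!a < P!Suc a then 1 else 0)"
proof -
  have "{b. b < Suc a \<and> P!b < P!Suc b} = {b. b < a \<and> P!b < P!Suc b} \<union> (if P!a < P!Suc a then {a} else {})"
    by (auto simp: less_Suc_eq)
  thus ?thesis unfolding asc_def by (auto simp: card_insert_if)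
qed

lemma rgf_formula:
  assumes "x \<in> RGF" "a < length x"
  shows "x ! (gP x ! a) = Suc (asc (gP x) a)"
  using assms(2)
proof (induction a)
  case 0
  let ?P = "gP x"
  have x0: "x!0 = 1" using rgf_props(2)[OF assms(1)] 0 by auto
  obtain c where c: "c < length x" "?P!c = 0" using gP_surj 0 by blast
  have "x ! (?P!0) \<le> 1" using mono_pos[of 0 c x] c x0 by auto
  moreover have "0 < x ! (?P!0)" using cayley_pos[OF rgf_props(1)[OF assms(1)]] gP_lt_n 0 by blast
  ultimately show ?case by (simp add: asc_def)
next
  case (Suc a)
  thus ?case using step_asc[OF assms(1) Suc.prems] step_desc[OF assms(1) Suc.prems] asc_Suc
    by (cases "gP x ! a < gP x ! Suc a") auto
qed

lemma gamma_Flat: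
  assumes "x \<in> RGF"
  shows "gamma x \<in> Flat"
proof -
  let ?P = "gP x" and ?n = "length x"
  have perm: "is_perm (gamma x)"
    unfolding is_perm_def cayley_def gamma_gP
  proof (intro conjI ballI)
    fix v assume "v \<in> set (map Suc ?P)"
    then obtain i where i: "i < ?n" "v = Suc i" using gP_set[of x] by auto
    thus "0 < v" by auto
    fix j assume "j \<in> {1..v}"
    hence "j - 1 < ?n" "j = Suc (j - 1)" using i by auto
    thus "j \<in> set (map Suc ?P)" using gP_set[of x] by (metis image_eqI lessThan_iff set_map)
  next
    show "distinct (map Suc ?P)" using gP_distinct by (simp add: distinct_map)
  qed
  have "\<not> (i + 1 < k \<and> k < ?n \<and> ?P!k < ?P!i \<and> ?P!i < ?P!(i+1))" for i k
  proof
    assume h: "i + 1 < k \<and> k < ?n \<and> ?P!k < ?P!i \<and> ?P!i < ?P!(i+1)"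
    have "lt x (?P!i) (?P!Suc i)" using gP_sp h by auto
    hence l1: "x ! (?P!i) < x ! (?P!Suc i)" using h by (auto simp: lt_def)
    have l2: "x ! (?P!Suc i) \<le> x ! (?P!k)" using mono_pos h by auto
    have "?P!i < ?n" using gP_lt_n h by simp
    hence pos: "1 \<le> x ! (?P!i)" using cayley_pos[OF rgf_props(1)[OF assms(1)]] by (simp add: Suc_le_eq)
    have Pk: "?P!k < ?n" using gP_lt_n h by simp
    have l3: "x ! (?P!i) < x ! (?P!k)" using l1 l2 by simp
    obtain c where c: "c < ?P!k" "x!c = x ! (?P!i)"
      using rgf_lower[OF assms(1) Pk pos l3] by blast
    have cn: "c < ?n" using c gP_lt_n[of k x] h by auto
    then obtain d where d: "d < ?n" "?P!d = c" using gP_surj by blast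
    have "lt x (?P!i) (?P!d)" using c d h by (auto simp: lt_def)
    hence "i < d" using gP_sp h d by auto
    hence "x ! (?P!Suc i) \<le> x ! (?P!d)" using mono_pos d by auto
    thus False using c d l1 by auto
  qed
  thus ?thesis using perm unfolding Flat_def by (auto simp: gamma_gP)
qed

lemma gamma_inj: "inj_on gamma RGF"
proof (rule inj_onI)
  fix x x' assume xs: "x \<in> RGF" "x' \<in> RGF" "gamma x = gamma x'"
  hence gg: "gP x = gP x'" unfolding gamma_gP by (simp add: inj_map_eq_map inj_def)
  hence len: "length x = length x'" by (metis gP_length)
  show "x = x'"
  proof (rule nth_equalityI)
    show "length x = length x'" by fact
    fix i assume i: "i < length x"
    then obtain c where c: "c < length x" "gP x ! c = i" using gP_surj by blast
    have c': "c < length x'" using c len by simp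
    have "x!i = Suc (asc (gP x) c)" using rgf_formula[OF xs(1) c(1)] c(2) by simp
    moreover have "x'!i = Suc (asc (gP x') c)" using rgf_formula[OF xs(2) c'] c(2) gg by simp
    ultimately show "x!i = x'!i" using gg by simp
  qed
qed




lemma perm_set:
  assumes "is_perm p"
  shows "set p = {1..length p}"
proof (cases "p = []")
  case True thus ?thesis by simp
next
  case False
  have c: "cayley p" and d: "distinct p" using assms by (auto simp: is_perm_def)
  define M where "M = Max (set p)"
  have Min: "M \<in> set p" using Max_in False M_def by auto
  have "set p \<subseteq> {1..M}" using c M_def unfolding cayley_def
    by (auto simp: Suc_le_eq)
  moreover have "{1..M} \<subseteq> set p" using c Min unfolding cayley_def by auto
  ultimately have s: "set p = {1..M}" by auto
  hence "M = length p" using distinct_card[OF d] by simp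
  thus ?thesis using s by simp
qed

lemma rgf_intro:
  assumes pos: "\<And>i. i < length x \<Longrightarrow> 0 < x!i"
    and dn: "\<And>i. i < length x \<Longrightarrow> 2 \<le> x!i \<Longrightarrow> \<exists>j<i. x!j = x!i - 1"
  shows "x \<in> RGF"
proof -
  have mem: "1 \<le> u \<Longrightarrow> u \<le> x!i \<Longrightarrow> u \<in> set x" if "i < length x" for i u
    using that
  proof (induction i arbitrary: u rule: less_induct)
    case (less i)
    show ?case
    proof (cases "u = x!i")
      case True thus ?thesis using less by auto
    next
      case False
      hence "2 \<le> x!i" using less by auto
      then obtain j where "j < i" "x!j = x!i - 1" using dn less by blast
      thus ?thesis using less False by auto
    qed
  qed
  have cay: "cayley x" unfolding cayley_def
  proof (intro ballI conjI)
    fix v assume "v \<in> set x"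
    then obtain i where i: "i < length x" "x!i = v" by (auto simp: in_set_conv_nth)
    thus "0 < v" using pos by auto
    fix j assume "j \<in> {1..v}"
    thus "j \<in> set x" using mem i by auto
  qed
  have x0: "length x \<ge> 1 \<Longrightarrow> x!0 = 1"
  proof -
    assume "length x \<ge> 1"
    hence l: "0 < length x" by (cases x) auto
    have "0 < x!0" "\<not> 2 \<le> x!0" using pos[OF l] dn[OF l] by auto
    thus "x!0 = 1" by auto
  qed
  have step: "x!i \<le> Max (set (take i x)) + 1" if ii: "1 \<le> i" "i < length x" for i
  proof (cases "2 \<le> x!i")
    case True
    then obtain j where j: "j < i" "x!j = x!i - 1" using dn ii by blast
    hence "x!j \<in> set (take i x)" using ii by (auto simp: in_set_conv_nth)
    hence "x!j \<le> Max (set (take i x))" by auto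
    thus ?thesis using j by auto
  next
    case False thus ?thesis by auto
  qed
  show ?thesis unfolding RGF_iff RGF_n_def using cay x0 step by auto
qed

lemma flat_surj:
  assumes "p \<in> Flat"
  shows "\<exists>x\<in>RGF. gamma x = p"
proof -
  let ?n = "length p"
  have ip: "is_perm p" using assms by (auto simp: Flat_def)
  have sp: "set p = {1..?n}" by (rule perm_set[OF ip])
  have dp: "distinct p" using ip by (auto simp: is_perm_def)
  define P where "P = map (\<lambda>v. v - 1) p"
  have lP: "length P = ?n" by (simp add: P_def)
  have pP: "p!a = Suc (P!a)" if "a < ?n" for a
  proof -
    have "p!a \<in> {1..?n}" using sp nth_mem[OF that] by metis
    thus ?thesis using that by (auto simp: P_def)
  qed
  have pmap: "p = map Suc P"
  proof (rule nth_equalityI)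
    show "length p = length (map Suc P)" using lP by simp
    fix i assume "i < length p"
    thus "p!i = map Suc P ! i" using pP lP by simp
  qed
  have dP: "distinct P" using dp pmap by (simp add: distinct_map)
  have sP: "set P = {..<?n}"
  proof -
    have e: "set P = (\<lambda>v. v - 1) ` {1..?n}" unfolding P_def using sp by simp
    show ?thesis unfolding e
    proof (intro set_eqI iffI)
      fix i assume "i \<in> (\<lambda>v. v - 1) ` {1..?n}" thus "i \<in> {..<?n}" by auto
    next
      fix i assume "i \<in> {..<?n}"
      hence "Suc i \<in> {1..?n}" "i = Suc i - 1" by auto
      thus "i \<in> (\<lambda>v. v - 1) ` {1..?n}" by (rule rev_image_eqI)
    qed
  qed
  have Pinj: "\<And>a b. a < ?n \<Longrightarrow> b < ?n \<Longrightarrow> P!a = P!b \<longleftrightarrow> a = b"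
    using dP lP by (simp add: nth_eq_iff_index_eq)
  have Pn: "\<And>a. a < ?n \<Longrightarrow> P!a < ?n" using sP lP by (metis lessThan_iff nth_mem)
  have flatP: "\<not> (i + 1 < k \<and> k < ?n \<and> P!k < P!i \<and> P!i < P!(i+1))" for i k
  proof
    assume h: "i + 1 < k \<and> k < ?n \<and> P!k < P!i \<and> P!i < P!(i+1)"
    hence "p!k < p!i \<and> p!i < p!(i+1)" using pP by auto
    thus False using assms h unfolding Flat_def by blast
  qed
  have "\<forall>i. \<exists>a. i < ?n \<longrightarrow> a < ?n \<and> P!a = i"
    using sP lP by (metis in_set_conv_nth lessThan_iff)
  then obtain h where h: "\<And>i. i < ?n \<Longrightarrow> h i < ?n \<and> P!(h i) = i" by metis
  have hP: "h (P!a) = a" if an: "a < ?n" for a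
  proof -
    have "h (P!a) < ?n \<and> P!(h (P!a)) = P!a" using h Pn an by blast
    thus ?thesis using Pinj[of "h (P!a)" a] an by blast
  qed
  define x where "x = map (\<lambda>i. Suc (asc P (h i))) [0..<?n]"
  have lx: "length x = ?n" by (simp add: x_def)
  have xP: "x!(P!a) = Suc (asc P a)" if an: "a < ?n" for a
  proof -
    have "x!(P!a) = Suc (asc P (h (P!a)))" using Pn[OF an] by (simp add: x_def)
    thus ?thesis using hP[OF an] by simp
  qed
  have asc_less: "asc P a < asc P b" if ac: "a \<le> c" "c < b" "P!c < P!Suc c" for a b c
  proof -
    have sub: "{d. d < a \<and> P!d < P!Suc d} \<subseteq> {d. d < b \<and> P!d < P!Suc d}" using ac by auto
    have c1: "c \<in> {d. d < b \<and> P!d < P!Suc d}" using ac by simp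
    have c2: "c \<notin> {d. d < a \<and> P!d < P!Suc d}" using ac by simp
    have "{d. d < a \<and> P!d < P!Suc d} \<subset> {d. d < b \<and> P!d < P!Suc d}" using sub c1 c2 by blast
    thus ?thesis unfolding asc_def by (rule psubset_card_mono[rotated]) simp
  qed
  have asc_eq: "asc P a = asc P b" if ab: "a \<le> b" "\<And>c. a \<le> c \<Longrightarrow> c < b \<Longrightarrow> \<not> P!c < P!Suc c" for a b
  proof -
    have "{d. d < a \<and> P!d < P!Suc d} = {d. d < b \<and> P!d < P!Suc d}"
    proof (intro set_eqI iffI)
      fix d assume "d \<in> {d. d < a \<and> P!d < P!Suc d}" thus "d \<in> {d. d < b \<and> P!d < P!Suc d}" using ab(1) by simp
    next
      fix d assume d: "d \<in> {d. d < b \<and> P!d < P!Suc d}"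
      have "\<not> a \<le> d"
      proof
        assume "a \<le> d" thus False using ab(2)[of d] d by simp
      qed
      thus "d \<in> {d. d < a \<and> P!d < P!Suc d}" using d by simp
    qed
    thus ?thesis unfolding asc_def by simp
  qed
  have desc: "P!b < P!a" if "a < b" "b < ?n" "\<And>c. a \<le> c \<Longrightarrow> c < b \<Longrightarrow> \<not> P!c < P!Suc c" for a b
    using that
  proof (induction b)
    case 0 thus ?case by simp
  next
    case (Suc b)
    have bn: "b < ?n" using Suc.prems(2) by simp
    have ne: "P!Suc b \<noteq> P!b" using Pinj[of "Suc b" b] Suc.prems(2) bn by simp
    have ab: "a \<le> b" using Suc.prems(1) by simp
    have "\<not> P!b < P!Suc b" using Suc.prems(3)[of b] ab by simp
    hence d1: "P!Suc b < P!b" using ne by simp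
    show ?case
    proof (cases "a = b")
      case True thus ?thesis using d1 by simp
    next
      case False
      hence ab': "a < b" using ab by simp
      have h3: "\<And>c. a \<le> c \<Longrightarrow> c < b \<Longrightarrow> \<not> P!c < P!Suc c" by (meson Suc.prems(3) less_SucI)
      have "P!b < P!a" by (rule Suc.IH[OF ab' bn h3])
      thus ?thesis using d1 by simp
    qed
  qed
  have sorted: "sorted_wrt (lt x) P"
    unfolding sorted_wrt_iff_nth_less
  proof (intro allI impI)
    fix a b assume ab: "a < b" "b < length P"
    have an: "a < ?n" "b < ?n" using ab lP by auto
    have xa: "x!(P!a) = Suc (asc P a)" "x!(P!b) = Suc (asc P b)" using xP an by auto
    show "lt x (P!a) (P!b)"
    proof (cases "\<exists>c. a \<le> c \<and> c < b \<and> P!c < P!Suc c")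
      case True
      then obtain c where "a \<le> c" "c < b" "P!c < P!Suc c" by blast
      hence "asc P a < asc P b" using asc_less by blast
      thus ?thesis using xa by (simp add: lt_def)
    next
      case False
      have nc: "\<And>c. a \<le> c \<Longrightarrow> c < b \<Longrightarrow> \<not> P!c < P!Suc c" using False by blast
      have "asc P a = asc P b" using asc_eq[of a b, OF _ nc] ab by simp
      moreover have "P!b < P!a" using desc[OF ab(1) an(2) nc] .
      ultimately show ?thesis using xa by (simp add: lt_def)
    qed
  qed
  have gx: "gamma x = p" using gamma_char[of P x] dP sP sorted lx pmap by simp
  have xR: "x \<in> RGF"
  proof (rule rgf_intro)
    fix i assume "i < length x" thus "0 < x!i" by (simp add: x_def)
  next
    fix i assume i: "i < length x" "2 \<le> x!i"
    define a where "a = h i"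
    have ilt: "i < ?n" using i lx by simp
    have a: "a < ?n" "P!a = i" using h[OF ilt] a_def by auto
    have xi: "x!i = Suc (asc P a)" using xP[OF a(1)] a(2) by simp
    let ?S = "{b. b < a \<and> P!b < P!Suc b}"
    have fin: "finite ?S" by auto
    have "asc P a \<noteq> 0" using i(2) xi by simp
    hence ne: "?S \<noteq> {}" unfolding asc_def by (metis card.empty)
    define c where "c = Max ?S"
    have cS: "c \<in> ?S" using Max_in[OF fin ne] c_def by simp
    have mx: "\<And>b. b \<in> ?S \<Longrightarrow> b \<le> c" using Max_ge[OF fin] c_def by simp
    have ca: "c < a" "P!c < P!Suc c" using cS by auto
    have "?S = insert c {b. b < c \<and> P!b < P!Suc b}"
    proof (intro set_eqI iffI)
      fix b assume bS: "b \<in> ?S"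
      hence "b \<le> c" using mx by blast
      thus "b \<in> insert c {b. b < c \<and> P!b < P!Suc b}" using bS by auto
    next
      fix b assume "b \<in> insert c {b. b < c \<and> P!b < P!Suc b}" thus "b \<in> ?S" using ca by auto
    qed
    hence ac: "asc P a = Suc (asc P c)" unfolding asc_def by (simp add: card_insert_if)
    have cn: "c < ?n" using ca a by simp
    have "P!c < P!a"
    proof (cases "a = Suc c")
      case True thus ?thesis using ca by simp
    next
      case False
      hence "c + 1 < a" using ca by simp
      hence "\<not> P!a < P!c" using flatP[of c a] ca a(1) by simp
      moreover have "P!a \<noteq> P!c" using Pinj[OF a(1) cn] ca by simp
      ultimately show ?thesis by simp
    qed
    moreover have "x!(P!c) = x!i - 1" using xP[OF cn] xi ac by simp
    ultimately show "\<exists>j<i. x!j = x!i - 1" using a(2) by blast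
  qed
  show ?thesis using gx xR by blast
qed




lemma part2: "gamma ` avoid_cls RGF y = Flat_av (gamma y)"
proof (intro set_eqI iffI)
  fix p assume "p \<in> gamma ` avoid_cls RGF y"
  then obtain x where x: "x \<in> RGF" "\<forall>z\<in>cls y. avoids x z" "p = gamma x"
    by (auto simp: avoid_cls_def)
  have "avoids p (gamma y)"
  proof (unfold avoids_def, rule notI)
    assume "contains p (gamma y)"
    then obtain z where "cayley z" "gamma z = gamma y" "contains x z"
      using contains_gamma_rev x(3) by blast
    thus False using x(2) by (auto simp: cls_def avoids_def)
  qed
  thus "p \<in> Flat_av (gamma y)" using gamma_Flat[OF x(1)] x(3) by (simp add: Flat_av_def)
next
  fix p assume p: "p \<in> Flat_av (gamma y)"
  then obtain x where x: "x \<in> RGF" "gamma x = p" using flat_surj by (auto simp: Flat_av_def)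
  have "\<forall>z\<in>cls y. avoids x z"
  proof
    fix z assume z: "z \<in> cls y"
    show "avoids x z"
    proof (unfold avoids_def, rule notI)
      assume "contains x z"
      hence "contains (gamma x) (gamma z)" by (rule contains_gamma)
      hence "contains p (gamma y)" using x(2) z by (simp add: cls_def)
      thus False using p by (simp add: Flat_av_def avoids_def)
    qed
  qed
  thus "p \<in> gamma ` avoid_cls RGF y" using x by (auto simp: avoid_cls_def)
qed

lemma gamma_perm_inv:
  assumes ip: "is_perm s"
  shows "gamma (perm_inv s) = s"
proof -
  let ?m = "length s"
  have sp: "set s = {1..?m}" by (rule perm_set[OF ip])
  have ds: "distinct s" using ip by (auto simp: is_perm_def)
  define Q where "Q = map (\<lambda>v. v - 1) s"
  define z where "z = perm_inv s"
  have lQ: "length Q = ?m" by (simp add: Q_def)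
  have lz: "length z = ?m" unfolding z_def perm_inv_def by (simp del: upt_Suc)
  have sQ: "s!a = Suc (Q!a)" if "a < ?m" for a
  proof -
    have "s!a \<in> {1..?m}" using sp nth_mem[OF that] by metis
    thus ?thesis using that by (auto simp: Q_def)
  qed
  have smap: "s = map Suc Q"
  proof (rule nth_equalityI)
    show "length s = length (map Suc Q)" using lQ by simp
    fix i assume "i < length s"
    thus "s!i = map Suc Q ! i" using sQ lQ by simp
  qed
  have dQ: "distinct Q" using ds smap by (simp add: distinct_map)
  have setQ: "set Q = {..<?m}"
  proof -
    have e: "set Q = (\<lambda>v. v - 1) ` {1..?m}" unfolding Q_def using sp by simp
    show ?thesis unfolding e
    proof (intro set_eqI iffI)
      fix i assume "i \<in> (\<lambda>v. v - 1) ` {1..?m}" thus "i \<in> {..<?m}" by auto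
    next
      fix i assume "i \<in> {..<?m}"
      hence "Suc i \<in> {1..?m}" "i = Suc i - 1" by auto
      thus "i \<in> (\<lambda>v. v - 1) ` {1..?m}" by (rule rev_image_eqI)
    qed
  qed
  have Qm: "Q!a < ?m" if "a < ?m" for a using setQ lQ that by (metis lessThan_iff nth_mem)
  have zQ: "z!(Q!a) = Suc a" if am: "a < ?m" for a
  proof -
    have "z!(Q!a) = Suc (LEAST i. i < ?m \<and> s!i = Suc (Q!a))"
      using Qm[OF am] unfolding z_def perm_inv_def by (simp del: upt_Suc add: nth_upt)
    also have "(LEAST i. i < ?m \<and> s!i = Suc (Q!a)) = a"
    proof (rule Least_equality)
      show "a < ?m \<and> s!a = Suc (Q!a)" using am sQ by simp
    next
      fix i assume "i < ?m \<and> s!i = Suc (Q!a)"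
      hence "i < ?m" "s!i = s!a" using sQ am by auto
      hence "i = a" using ds am by (simp add: nth_eq_iff_index_eq)
      thus "a \<le> i" by simp
    qed
    finally show ?thesis .
  qed
  have sorted: "sorted_wrt (lt z) Q"
    unfolding sorted_wrt_iff_nth_less
  proof (intro allI impI)
    fix a b assume ab: "a < b" "b < length Q"
    hence "a < ?m" "b < ?m" using lQ by auto
    thus "lt z (Q!a) (Q!b)" using zQ ab by (simp add: lt_def)
  qed
  have "gamma z = map Suc Q" using gamma_char[of Q z] dQ setQ sorted lz by simp
  thus ?thesis using smap z_def by simp
qed

lemma avoid_cls_n: "avoid_cls (RGF_n n) w = {x \<in> avoid_cls RGF w. length x = n}"
  by (auto simp: avoid_cls_def RGF_def RGF_n_def)

theorem theorem6p4:
  fixes \<sigma> y :: "nat list"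
  assumes "is_perm \<sigma>" and "cayley y"
  shows "Flat_av \<sigma> = gamma ` avoid_cls RGF (perm_inv \<sigma>)
     \<and> gamma ` avoid_cls RGF y = Flat_av (gamma y)
     \<and> (\<forall>n. card (Flat_n n \<sigma>) = card (avoid_cls (RGF_n n) (perm_inv \<sigma>)))"
proof (intro conjI allI)
  have p1: "Flat_av \<sigma> = gamma ` avoid_cls RGF (perm_inv \<sigma>)"
    using part2[of "perm_inv \<sigma>"] gamma_perm_inv[OF assms(1)] by simp
  thus "Flat_av \<sigma> = gamma ` avoid_cls RGF (perm_inv \<sigma>)" .
  show "gamma ` avoid_cls RGF y = Flat_av (gamma y)" by (rule part2)
  fix n
  let ?A = "avoid_cls (RGF_n n) (perm_inv \<sigma>)"
  have "Flat_n n \<sigma> = gamma ` ?A"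
    unfolding Flat_n_def p1 avoid_cls_n by auto
  moreover have "inj_on gamma ?A"
    by (rule inj_on_subset[OF gamma_inj]) (auto simp: avoid_cls_def RGF_def)
  ultimately show "card (Flat_n n \<sigma>) = card ?A" by (simp add: card_image)
qed


end
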